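(* Let $N\in\mathbb N$, let $\{\Omega_k\}_k\subset\mathscr A$ be $N$-admissible sets and let $M\le N$ be a positive integer. Then: (i) if $\Omega_1\subset\Omega_2$, then $h_M(\Omega_1)\ge h_M(\Omega_2)$; (ii) if (P.6) holds and $\mathfrak m(\Omega_k)\to0$, then $h_M(\Omega_k)\to+\infty$; (iii) if (P.4), (P.5), (P.6) hold and $\Omega_k\to\Omega$ in $L^1(X,\mathfrak m)$ for some $\Omega\in\mathscr A$ with $\mathfrak m(\Omega)\in(0,+\infty)$, then $h_M(\Omega)\le\liminf_k h_M(\Omega_k)$ (with the convention $h_M(\Omega)=+\infty$ if $\Omega$ is not $M$-admissible). If moreover (P.3) holds, $P(\Omega)<+\infty$ and $P(\Omega_k)\to P(\Omega)$, then $h_M(\Omega)=\lim_k h_M(\Omega_k)$.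
   Context: $(X,\mathscr A,\mathfrak m)$ is a non-negative $\sigma$-finite measure space; for $A,B\in\mathscr A$, "$A\subset B$" means $\mathfrak m(A\setminus B)=0$. $P\colon\mathscr A\to[0,+\infty]$ is a proper functional (the perimeter). Convergence of sets in $L^1(X,\mathfrak m)$ means $L^1$ convergence of characteristic functions. Properties: (P.3) $P(E\cap F)+P(E\cup F)\le P(E)+P(F)$ for all $E,F\in\mathscr A$. (P.4) if $\chi_{E_k}\to\chi_E$ in $L^1(X,\mathfrak m)$ then $P(E)\le\liminf_k P(E_k)$. (P.5) for every $c\ge0$, $\{\chi_E: E\in\mathscr A,\ P(E)\le c\}$ is compact in $L^1(X,\mathfrak m)$. (P.6) there is $f\colon(0,+\infty)\to(0,+\infty)$ with $\lim_{\varepsilon\to0^+}f(\varepsilon)=+\infty$ such that $\mathfrak m(E)\le\varepsilon$ implies $P(E)\ge f(\varepsilon)\mathfrak m(E)$. An $N$-cluster is a family $\{\mathcal E(i)\}_{i=1}^N\subset\mathscr A$ with $0<\mathfrak m(\mathcal E(i))<+\infty$, $P(\mathcal E(i))<+\infty$, $\mathfrak m(\mathcal E(i)\cap\mathcal E(j))=0$ for $i\neq j$. $\Omega$ is $N$-admissible if it contains an $N$-cluster (then it is $M$-admissible for $M\le N$). $h_M(\Omega)=\inf\{\sum_{i=1}^M P(\mathcal E(i))/\mathfrak m(\mathcal E(i)):\mathcal E \text{ an } M\text{-cluster in }\Omega\}$. *)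

theory Defs
  imports "HOL-Analysis.Analysis"
begin

text \<open>Sets are identified up to null sets: "A \<subset> B" means m(A - B) = 0.\<close>
definition ae_subset :: "'a measure \<Rightarrow> 'a set \<Rightarrow> 'a set \<Rightarrow> bool" where
  "ae_subset m A B \<longleftrightarrow> emeasure m (A - B) = 0"

definition L1_conv_sets :: "'a measure \<Rightarrow> (nat \<Rightarrow> 'a set) \<Rightarrow> 'a set \<Rightarrow> bool" where
  "L1_conv_sets m E F \<longleftrightarrow>
     ((\<lambda>k. \<integral>\<^sup>+ x. ennreal \<bar>indicator (E k) x - indicator F x :: real\<bar> \<partial>m) \<longlonglongrightarrow> 0)"

definition proper_functional :: "'a measure \<Rightarrow> ('a set \<Rightarrow> ennreal) \<Rightarrow> bool" where
  "proper_functional m P \<longleftrightarrow> (\<exists>E\<in>sets m. P E < top)"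

definition P3 :: "'a measure \<Rightarrow> ('a set \<Rightarrow> ennreal) \<Rightarrow> bool" where
  "P3 m P \<longleftrightarrow> (\<forall>E\<in>sets m. \<forall>F\<in>sets m. P (E \<inter> F) + P (E \<union> F) \<le> P E + P F)"

definition P4 :: "'a measure \<Rightarrow> ('a set \<Rightarrow> ennreal) \<Rightarrow> bool" where
  "P4 m P \<longleftrightarrow> (\<forall>E F. (\<forall>k. E k \<in> sets m) \<longrightarrow> F \<in> sets m \<longrightarrow> L1_conv_sets m E F
      \<longrightarrow> P F \<le> liminf (\<lambda>k. P (E k)))"

definition P5 :: "'a measure \<Rightarrow> ('a set \<Rightarrow> ennreal) \<Rightarrow> bool" where
  "P5 m P \<longleftrightarrow> (\<forall>c::real. c \<ge> 0 \<longrightarrow> (\<forall>E::nat \<Rightarrow> 'a set. (\<forall>k. E k \<in> sets m \<and> P (E k) \<le> ennreal c) \<longrightarrow>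
      (\<exists>(r::nat \<Rightarrow> nat) F. strict_mono r \<and> F \<in> sets m \<and> P F \<le> ennreal c \<and> L1_conv_sets m (E \<circ> r) F)))"

definition P6 :: "'a measure \<Rightarrow> ('a set \<Rightarrow> ennreal) \<Rightarrow> bool" where
  "P6 m P \<longleftrightarrow> (\<exists>f :: real \<Rightarrow> real. (\<forall>\<epsilon>>0. f \<epsilon> > 0) \<and> filterlim f at_top (at_right 0) \<and>
      (\<forall>\<epsilon>>0. \<forall>E\<in>sets m. emeasure m E \<le> ennreal \<epsilon> \<longrightarrow> ennreal (f \<epsilon>) * emeasure m E \<le> P E))"

definition is_cluster :: "'a measure \<Rightarrow> ('a set \<Rightarrow> ennreal) \<Rightarrow> nat \<Rightarrow> (nat \<Rightarrow> 'a set) \<Rightarrow> bool" where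
  "is_cluster m P N C \<longleftrightarrow>
     (\<forall>i\<in>{1..N}. C i \<in> sets m \<and> 0 < emeasure m (C i) \<and> emeasure m (C i) < top \<and> P (C i) < top) \<and>
     (\<forall>i\<in>{1..N}. \<forall>j\<in>{1..N}. i \<noteq> j \<longrightarrow> emeasure m (C i \<inter> C j) = 0)"

definition cluster_in :: "'a measure \<Rightarrow> ('a set \<Rightarrow> ennreal) \<Rightarrow> nat \<Rightarrow> (nat \<Rightarrow> 'a set) \<Rightarrow> 'a set \<Rightarrow> bool" where
  "cluster_in m P N C \<Omega> \<longleftrightarrow> is_cluster m P N C \<and> (\<forall>i\<in>{1..N}. ae_subset m (C i) \<Omega>)"

definition admissible :: "'a measure \<Rightarrow> ('a set \<Rightarrow> ennreal) \<Rightarrow> nat \<Rightarrow> 'a set \<Rightarrow> bool" where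
  "admissible m P N \<Omega> \<longleftrightarrow> \<Omega> \<in> sets m \<and> (\<exists>C. cluster_in m P N C \<Omega>)"

text \<open>h_M(Omega); Inf of the empty set is top, matching the convention h_M = +\<infinity>.\<close>
definition h_const :: "'a measure \<Rightarrow> ('a set \<Rightarrow> ennreal) \<Rightarrow> nat \<Rightarrow> 'a set \<Rightarrow> ennreal" where
  "h_const m P M \<Omega> = Inf {(\<Sum>i\<in>{1..M}. P (C i) / emeasure m (C i)) | C. cluster_in m P M C \<Omega>}"

end

theory Submission
  imports Defs
begin


definition sdiff :: "'a set \<Rightarrow> 'a set \<Rightarrow> 'a set" where "sdiff A B = (A - B) \<union> (B - A)"

lemma L1_iff:
  assumes "\<And>k. E k \<in> sets m" "F \<in> sets m"
  shows "L1_conv_sets m E F \<longleftrightarrow> (\<lambda>k. emeasure m (sdiff (E k) F)) \<longlonglongrightarrow> 0"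
proof -
  have "(\<integral>\<^sup>+ x. ennreal \<bar>indicator (E k) x - indicator F x :: real\<bar> \<partial>m) = emeasure m (sdiff (E k) F)" for k
  proof -
    have "(\<lambda>x. ennreal \<bar>indicator (E k) x - indicator F x :: real\<bar>) = indicator (sdiff (E k) F)"
      by (auto simp: sdiff_def indicator_def)
    moreover have "sdiff (E k) F \<in> sets m" using assms by (auto simp: sdiff_def)
    ultimately show ?thesis by simp
  qed
  then show ?thesis unfolding L1_conv_sets_def by simp
qed

lemma tendsto_inverse_ennreal:
  fixes u :: "nat \<Rightarrow> ennreal"
  assumes "u \<longlonglongrightarrow> l" shows "(\<lambda>n. inverse (u n)) \<longlonglongrightarrow> inverse l"
  using continuous_on_inverse_ennreal[OF continuous_on_id, of UNIV] assms
  by (metis UNIV_I continuous_on_tendsto_compose eventually_sequentially)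

lemma ennreal_epsilon_tendsto:
  fixes a :: "nat \<Rightarrow> ennreal"
  assumes up: "\<And>e. 0 < e \<Longrightarrow> eventually (\<lambda>k. a k \<le> L + ennreal e) sequentially"
    and lo: "\<And>e. 0 < e \<Longrightarrow> eventually (\<lambda>k. L \<le> a k + ennreal e) sequentially"
  shows "a \<longlonglongrightarrow> L"
proof -
  have s: "Limsup sequentially a \<le> L"
    by (rule ennreal_le_epsilon) (use Limsup_bounded[OF up] in auto)
  have i: "L \<le> Liminf sequentially a"
  proof (rule ennreal_le_epsilon)
    fix e :: real assume "0 < e"
    have "eventually (\<lambda>k. L - ennreal e \<le> a k) sequentially"
      using lo[OF \<open>0<e\<close>] by eventually_elim (simp add: ennreal_minus_le_iff add.commute)
    then have "L - ennreal e \<le> Liminf sequentially a" by (rule Liminf_bounded)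
    then show "L \<le> Liminf sequentially a + ennreal e" by (simp add: ennreal_minus_le_iff add.commute)
  qed
  have "Liminf sequentially a \<le> Limsup sequentially a" by (simp add: Liminf_le_Limsup)
  then show ?thesis using s i by (intro Liminf_eq_Limsup) auto
qed

lemma meas_le2:
  assumes "A \<in> sets m" "B \<in> sets m" "C \<in> sets m" "A \<subseteq> B \<union> C"
  shows "emeasure m A \<le> emeasure m B + emeasure m C"
  by (meson assms emeasure_mono emeasure_subadditive order_trans sets.Un)

lemma meas_le3:
  assumes "A \<in> sets m" "B \<in> sets m" "C \<in> sets m" "D \<in> sets m" "A \<subseteq> B \<union> C \<union> D"
  shows "emeasure m A \<le> emeasure m B + emeasure m C + emeasure m D"
proof -
  have "emeasure m A \<le> emeasure m (B \<union> C) + emeasure m D"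
    using assms by (intro meas_le2) auto
  also have "\<dots> \<le> emeasure m B + emeasure m C + emeasure m D"
    using assms by (intro add_right_mono emeasure_subadditive) auto
  finally show ?thesis .
qed

lemma ae_trans:
  assumes "C \<in> sets m" "A \<in> sets m" "B \<in> sets m" "ae_subset m C A" "ae_subset m A B"
  shows "ae_subset m C B"
proof -
  have "emeasure m (C - B) \<le> emeasure m (C - A) + emeasure m (A - B)"
    using assms by (intro meas_le2) auto
  then show ?thesis using assms unfolding ae_subset_def by simp
qed

lemma ae_meas_le:
  assumes "C \<in> sets m" "A \<in> sets m" "ae_subset m C A"
  shows "emeasure m C \<le> emeasure m A"
proof -
  have "emeasure m C \<le> emeasure m A + emeasure m (C - A)"
    using assms by (intro meas_le2) auto
  then show ?thesis using assms unfolding ae_subset_def by simp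
qed

lemma div_mult_cancel_enn:
  fixes x p :: ennreal
  assumes "0 < x" "x < top" shows "p / x * x = p"
  using assms by (simp add: ennreal_divide_times)

lemma ratio_upper:
  fixes x p a :: ennreal
  assumes "p \<le> a * x" "0 < x" "x < top" shows "p / x \<le> a"
  using assms by (simp add: divide_le_posI_ennreal mult.commute)

lemma ennreal_1_less_top: "(1::ennreal) < top" by simp

lemma ratio_lower:
  fixes x p :: ennreal
  assumes "0 < x" "x < top" "a * x \<le> p"
  shows "a \<le> p / x"
  using assms by (metis divide_less_ennreal leD leI nless_le)

lemma part1:
  assumes "admissible m P N A" "B \<in> sets m" "ae_subset m A B"
  shows "h_const m P M B \<le> h_const m P M A"
  unfolding h_const_def
proof (rule Inf_superset_mono, safe)
  fix C assume c: "cluster_in m P M C A"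
  have "cluster_in m P M C B"
    using c assms unfolding cluster_in_def admissible_def is_cluster_def
    by (meson ae_trans)
  then show "\<exists>C'. (\<Sum>i = 1..M. P (C i) / emeasure m (C i)) = (\<Sum>i = 1..M. P (C' i) / emeasure m (C' i)) \<and> cluster_in m P M C' B"
    by blast
qed

lemma part2:
  assumes adm: "\<And>k. admissible m P N (\<Omega>s k)" and M1: "1 \<le> M" and M2: "M \<le> N"
    and p6: "P6 m P" and lim: "(\<lambda>k. emeasure m (\<Omega>s k)) \<longlonglongrightarrow> 0"
  shows "(\<lambda>k. h_const m P M (\<Omega>s k)) \<longlonglongrightarrow> top"
proof -
  obtain f :: "real \<Rightarrow> real" where fpos: "\<forall>\<epsilon>>0. f \<epsilon> > 0" and flim: "filterlim f at_top (at_right 0)"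
    and fP: "\<forall>\<epsilon>>0. \<forall>E\<in>sets m. emeasure m E \<le> ennreal \<epsilon> \<longrightarrow> ennreal (f \<epsilon>) * emeasure m E \<le> P E"
    using p6 unfolding P6_def by blast
  define \<epsilon> where "\<epsilon> k = enn2real (emeasure m (\<Omega>s k))" for k
  have pos: "0 < emeasure m (\<Omega>s k)" for k
  proof -
    obtain C where c: "cluster_in m P N C (\<Omega>s k)" "\<Omega>s k \<in> sets m" using adm[of k] unfolding admissible_def by blast
    have "1 \<in> {1..N}" using M1 M2 by auto
    then have "0 < emeasure m (C 1)" "emeasure m (C 1) \<le> emeasure m (\<Omega>s k)"
      using c unfolding cluster_in_def is_cluster_def by (auto intro: ae_meas_le)
    then show ?thesis by order
  qed
  have ev1: "eventually (\<lambda>k. emeasure m (\<Omega>s k) < 1) sequentially"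
    using lim by (rule order_tendstoD) simp
  have epos: "eventually (\<lambda>k. \<epsilon> k > 0) sequentially"
    using ev1 by eventually_elim (use pos in \<open>auto simp: \<epsilon>_def enn2real_positive_iff intro: order.strict_trans[OF _ ennreal_1_less_top]\<close>)
  have "\<epsilon> \<longlonglongrightarrow> 0" unfolding \<epsilon>_def using tendsto_enn2real[of _ 0] lim by simp
  then have "filterlim \<epsilon> (at_right 0) sequentially"
    using epos by (rule tendsto_imp_filterlim_at_right)
  then have flim2: "filterlim (\<lambda>k. f (\<epsilon> k)) at_top sequentially"
    using flim by (rule filterlim_compose[rotated])
  have low: "eventually (\<lambda>k. ennreal (f (\<epsilon> k)) \<le> h_const m P M (\<Omega>s k)) sequentially"
    using ev1 epos
  proof eventually_elim
    case (elim k)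
    have ek: "emeasure m (\<Omega>s k) = ennreal (\<epsilon> k)"
      using elim unfolding \<epsilon>_def using order.strict_trans[OF _ ennreal_1_less_top] by (metis ennreal_enn2real_if less_irrefl)
    show ?case unfolding h_const_def
    proof (rule Inf_greatest, safe)
      fix C assume c: "cluster_in m P M C (\<Omega>s k)"
      have "1 \<in> {1..M}" using M1 by auto
      then have C1: "C 1 \<in> sets m" "0 < emeasure m (C 1)" "emeasure m (C 1) < top" "ae_subset m (C 1) (\<Omega>s k)"
        using c unfolding cluster_in_def is_cluster_def by auto
      have "\<Omega>s k \<in> sets m" using adm[of k] unfolding admissible_def by auto
      then have "emeasure m (C 1) \<le> ennreal (\<epsilon> k)" using C1 ek ae_meas_le by metis
      then have "ennreal (f (\<epsilon> k)) * emeasure m (C 1) \<le> P (C 1)" using fP elim C1 by blast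
      then have "ennreal (f (\<epsilon> k)) \<le> P (C 1) / emeasure m (C 1)" using C1 by (intro ratio_lower) auto
      also have "\<dots> \<le> (\<Sum>i = 1..M. P (C i) / emeasure m (C i))"
        using \<open>1 \<in> {1..M}\<close> by (intro member_le_sum) auto
      finally show "ennreal (f (\<epsilon> k)) \<le> (\<Sum>i = 1..M. P (C i) / emeasure m (C i))" .
    qed
  qed
  show ?thesis
  proof (rule order_tendstoI)
    fix y :: ennreal assume "y < top"
    have "eventually (\<lambda>k. f (\<epsilon> k) \<ge> enn2real y + 1) sequentially"
      using flim2 by (simp add: filterlim_at_top)
    then show "eventually (\<lambda>k. y < h_const m P M (\<Omega>s k)) sequentially"
      using low
    proof eventually_elim
      case (elim k)
      have "y < ennreal (enn2real y + 1)" using \<open>y < top\<close>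
        by (metis ennreal_enn2real_if ennreal_less_iff enn2real_nonneg less_add_one less_top not_less_iff_gr_or_eq add_nonneg_nonneg zero_le_one)
      also have "\<dots> \<le> ennreal (f (\<epsilon> k))" using elim by (intro ennreal_leI) auto
      finally show ?case using elim by order
    qed
  qed simp
qed


lemma subseq_freq:
  assumes "frequently Q sequentially"
  shows "\<exists>s::nat\<Rightarrow>nat. strict_mono s \<and> (\<forall>k. Q (s k))"
proof -
  have "infinite {k. Q k}"
    using assms unfolding frequently_sequentially infinite_nat_iff_unbounded_le by auto
  then show ?thesis using infinite_enumerate by blast
qed

lemma Liminf_less_freq:
  fixes f :: "nat \<Rightarrow> ennreal"
  assumes "liminf f < y" shows "frequently (\<lambda>k. f k < y) sequentially"
proof (rule ccontr)
  assume "\<not> ?thesis"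
  then have "eventually (\<lambda>k. y \<le> f k) sequentially"
    by (simp add: not_frequently not_less)
  then have "y \<le> liminf f" by (rule Liminf_bounded)
  then show False using assms by simp
qed

lemma diag_aux:
  assumes step: "\<And>i s. i \<in> I \<Longrightarrow> strict_mono (s::nat\<Rightarrow>nat) \<Longrightarrow> \<exists>r. strict_mono r \<and> Q i (s \<circ> r)"
    and closed: "\<And>i s r. i \<in> I \<Longrightarrow> Q i s \<Longrightarrow> strict_mono (r::nat\<Rightarrow>nat) \<Longrightarrow> Q i (s \<circ> r)"
    and "finite J" "J \<subseteq> I"
  shows "\<exists>s. strict_mono s \<and> (\<forall>i\<in>J. Q i s)"
  using assms(3,4)
proof (induction J rule: finite_induct)
  case empty
  then show ?case by (intro exI[of _ id]) (auto simp: strict_mono_def)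
next
  case (insert x J)
  then obtain s where s: "strict_mono s" "\<forall>i\<in>J. Q i s" by auto
  obtain r where r: "strict_mono r" "Q x (s \<circ> r)" using step[of x s] insert s by auto
  have "strict_mono (s \<circ> r)" using s r by (simp add: strict_mono_def)
  moreover have "\<forall>i\<in>insert x J. Q i (s \<circ> r)" using s r closed insert by auto
  ultimately show ?case by blast
qed

lemma lim_le_of:
  fixes a d :: "nat \<Rightarrow> ennreal"
  assumes "a \<longlonglongrightarrow> \<alpha>" "d \<longlonglongrightarrow> 0" "\<And>k. a k \<le> b + d k"
  shows "\<alpha> \<le> b"
proof -
  have "(\<lambda>k. b + d k) \<longlonglongrightarrow> b + 0" using assms by (intro tendsto_intros) auto
  then show ?thesis using assms by (intro LIMSEQ_le[of a \<alpha> "\<lambda>k. b + d k" "b+0", simplified]) auto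
qed

lemma le_lim_of:
  fixes a d :: "nat \<Rightarrow> ennreal"
  assumes "a \<longlonglongrightarrow> \<alpha>" "d \<longlonglongrightarrow> 0" "\<And>k. b \<le> a k + d k"
  shows "b \<le> \<alpha>"
proof -
  have "(\<lambda>k. a k + d k) \<longlonglongrightarrow> \<alpha> + 0" using assms by (intro tendsto_intros) auto
  then show ?thesis using assms by (intro LIMSEQ_le_const[of "\<lambda>k. a k + d k" "\<alpha>+0", simplified]) auto
qed

lemma le_of_tend0:
  fixes d :: "nat \<Rightarrow> ennreal"
  assumes "\<And>k. a \<le> b + d k" "d \<longlonglongrightarrow> 0"
  shows "a \<le> b"
  using lim_le_of[of "\<lambda>_. a" a d b] assms by auto


lemma part3a:
  assumes sets: "\<And>k. \<Omega>s k \<in> sets m" and \<Omega>: "\<Omega> \<in> sets m" and M1: "1 \<le> M"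
    and p4: "P4 m P" and p5: "P5 m P" and p6: "P6 m P"
    and fin: "emeasure m \<Omega> < top" and conv: "L1_conv_sets m \<Omega>s \<Omega>"
  shows "h_const m P M \<Omega> \<le> liminf (\<lambda>k. h_const m P M (\<Omega>s k))"
proof (rule dense_ge)
  fix y assume Ly: "liminf (\<lambda>k. h_const m P M (\<Omega>s k)) < y"
  show "h_const m P M \<Omega> \<le> y"
  proof (cases "y = top")
    case True then show ?thesis by simp
  next
    case False
    then obtain t where yt: "y = ennreal t" and t0: "0 \<le> t" by (cases y rule: ennreal_cases) auto
    define d where "d k = emeasure m (sdiff (\<Omega>s k) \<Omega>)" for k
    have d0: "d \<longlonglongrightarrow> 0" using L1_iff[of \<Omega>s m \<Omega>] sets \<Omega> conv unfolding d_def by simp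
    define R where "R = enn2real (emeasure m \<Omega>) + 1"
    have mR: "emeasure m \<Omega> + 1 = ennreal R"
      using fin unfolding R_def by simp
    have R0: "0 \<le> R" unfolding R_def by simp
    have ev: "eventually (\<lambda>k. d k < 1) sequentially" using d0 by (rule order_tendstoD) simp
    have "frequently (\<lambda>k. h_const m P M (\<Omega>s k) < y \<and> d k < 1) sequentially"
      by (rule frequently_mp[OF _ Liminf_less_freq[OF Ly]]) (use ev in \<open>auto elim: eventually_mono\<close>)
    from subseq_freq[OF this] obtain s0 :: "nat \<Rightarrow> nat" where s0': "strict_mono s0"
      "\<forall>k. h_const m P M (\<Omega>s (s0 k)) < y \<and> d (s0 k) < 1" by blast
    then have s0: "strict_mono s0" "\<And>k. h_const m P M (\<Omega>s (s0 k)) < y" "\<And>k. d (s0 k) < 1" by auto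
    have "\<exists>C. cluster_in m P M C (\<Omega>s (s0 k)) \<and> (\<Sum>i = 1..M. P (C i) / emeasure m (C i)) < y" for k
      using s0(2)[of k] unfolding h_const_def Inf_less_iff by auto
    then obtain D where D: "\<And>k. cluster_in m P M (D k) (\<Omega>s (s0 k))"
      "\<And>k. (\<Sum>i = 1..M. P (D k i) / emeasure m (D k i)) < y" by metis
    define r where "r k i = P (D k i) / emeasure m (D k i)" for k i
    have Dsets: "D k i \<in> sets m" and Dpos: "0 < emeasure m (D k i)" and Dfin: "emeasure m (D k i) < top"
      and DP: "P (D k i) < top" and Dae: "ae_subset m (D k i) (\<Omega>s (s0 k))" if "i \<in> {1..M}" for k i
      using D(1)[of k] that unfolding cluster_in_def is_cluster_def by auto
    have Ddisj: "emeasure m (D k i \<inter> D k j) = 0" if "i \<in> {1..M}" "j \<in> {1..M}" "i \<noteq> j" for k i j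
      using D(1)[of k] that unfolding cluster_in_def is_cluster_def by auto
    have rle: "r k i < y" if "i \<in> {1..M}" for k i
    proof -
      have "r k i \<le> (\<Sum>i = 1..M. r k i)" using that by (intro member_le_sum) auto
      then show ?thesis using D(2)[of k] unfolding r_def by order
    qed
    have Om: "emeasure m (\<Omega>s (s0 k)) \<le> ennreal R" for k
    proof -
      have "emeasure m (\<Omega>s (s0 k)) \<le> emeasure m \<Omega> + d (s0 k)"
        unfolding d_def using sets \<Omega> by (intro meas_le2) (auto simp: sdiff_def)
      also have "\<dots> \<le> emeasure m \<Omega> + 1" using s0(3)[of k] by (intro add_left_mono) simp
      finally show ?thesis using mR by simp
    qed
    have Dm: "emeasure m (D k i) \<le> ennreal R" if "i \<in> {1..M}" for k i
      using ae_meas_le[OF Dsets[OF that, of k] sets Dae[OF that, of k]] Om[of k] by order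
    have Prm: "P (D k i) = r k i * emeasure m (D k i)" if "i \<in> {1..M}" for k i
      using div_mult_cancel_enn[OF Dpos[OF that, of k] Dfin[OF that, of k]] unfolding r_def by simp
    have Pbound: "P (D k i) \<le> ennreal (t * R)" if "i \<in> {1..M}" for k i
    proof -
      have "r k i * emeasure m (D k i) \<le> ennreal t * ennreal R"
        using rle[OF that, of k] Dm[OF that, of k] yt by (intro mult_mono) auto
      then show ?thesis using Prm[OF that] t0 R0 by (simp add: ennreal_mult)
    qed
    obtain f :: "real \<Rightarrow> real" where flim: "filterlim f at_top (at_right 0)"
      and fP: "\<forall>\<epsilon>>0. \<forall>E\<in>sets m. emeasure m E \<le> ennreal \<epsilon> \<longrightarrow> ennreal (f \<epsilon>) * emeasure m E \<le> P E"
      using p6 unfolding P6_def by blast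
    have "eventually (\<lambda>x. f x > t) (at_right 0)" using flim by (simp add: filterlim_at_top_dense)
    then obtain b :: real where b: "b > 0" "\<And>x. 0 < x \<Longrightarrow> x < b \<Longrightarrow> f x > t"
      unfolding eventually_at_right_field by blast
    define e0 where "e0 = b / 2"
    have e0: "0 < e0" "f e0 > t" using b unfolding e0_def by auto
    have Dlow: "ennreal e0 < emeasure m (D k i)" if "i \<in> {1..M}" for k i
    proof (rule ccontr)
      assume "\<not> ?thesis"
      then have "emeasure m (D k i) \<le> ennreal e0" by simp
      then have "ennreal (f e0) * emeasure m (D k i) \<le> P (D k i)" using fP e0 Dsets[OF that, of k] by blast
      then have "ennreal (f e0) \<le> r k i" unfolding r_def using Dpos[OF that, of k] Dfin[OF that, of k] by (intro ratio_lower)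
      then have "ennreal (f e0) < ennreal t" using rle[OF that, of k] yt by order
      then show False using e0 t0 by (simp add: ennreal_less_iff)
    qed
    define Q where "Q i s \<longleftrightarrow> (\<exists>F \<rho> \<mu>. F \<in> sets m \<and> P F \<le> ennreal (t * R)
       \<and> L1_conv_sets m (\<lambda>k. D (s k) i) F \<and> (\<lambda>k. r (s k) i) \<longlonglongrightarrow> \<rho>
       \<and> (\<lambda>k. emeasure m (D (s k) i)) \<longlonglongrightarrow> \<mu>)" for i and s :: "nat \<Rightarrow> nat"
    have "\<exists>s. strict_mono s \<and> (\<forall>i\<in>{1..M}. Q i s)"
    proof (rule diag_aux[of "{1..M}"])
      fix i and s :: "nat \<Rightarrow> nat" assume i: "i \<in> {1..M}" and s: "strict_mono s"
      obtain \<rho> r1 where r1: "strict_mono r1" "((\<lambda>k. r (s k) i) \<circ> r1) \<longlonglongrightarrow> \<rho>"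
        using compact_complete_linorder by blast
      obtain \<mu> r2 where r2: "strict_mono r2" "((\<lambda>k. emeasure m (D (s (r1 k)) i)) \<circ> r2) \<longlonglongrightarrow> \<mu>"
        using compact_complete_linorder by blast
      have "\<exists>(r3::nat \<Rightarrow> nat) F. strict_mono r3 \<and> F \<in> sets m \<and> P F \<le> ennreal (t * R) \<and>
          L1_conv_sets m ((\<lambda>k. D (s (r1 (r2 k))) i) \<circ> r3) F"
        using p5[unfolded P5_def, rule_format, of "t * R" "\<lambda>k. D (s (r1 (r2 k))) i"]
          Dsets[OF i] Pbound[OF i] t0 R0 by (simp add: o_def)
      then obtain r3 F where r3: "strict_mono r3" "F \<in> sets m" "P F \<le> ennreal (t * R)"
        "L1_conv_sets m ((\<lambda>k. D (s (r1 (r2 k))) i) \<circ> r3) F" by blast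
      have "Q i (s \<circ> (r1 \<circ> r2 \<circ> r3))"
        unfolding Q_def
      proof (intro exI conjI)
        show "F \<in> sets m" "P F \<le> ennreal (t * R)" by fact+
        show "L1_conv_sets m (\<lambda>k. D ((s \<circ> (r1 \<circ> r2 \<circ> r3)) k) i) F"
          using r3(4) by (simp add: o_def)
        show "(\<lambda>k. r ((s \<circ> (r1 \<circ> r2 \<circ> r3)) k) i) \<longlonglongrightarrow> \<rho>"
          using LIMSEQ_subseq_LIMSEQ[OF LIMSEQ_subseq_LIMSEQ[OF r1(2) r2(1)] r3(1)] by (simp add: o_def)
        show "(\<lambda>k. emeasure m (D ((s \<circ> (r1 \<circ> r2 \<circ> r3)) k) i)) \<longlonglongrightarrow> \<mu>"
          using LIMSEQ_subseq_LIMSEQ[OF r2(2) r3(1)] by (simp add: o_def)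
      qed
      moreover have "strict_mono (r1 \<circ> r2 \<circ> r3)" using r1 r2 r3 by (simp add: strict_mono_def)
      ultimately show "\<exists>r'. strict_mono r' \<and> Q i (s \<circ> r')" by blast
    next
      fix i and s r' :: "nat \<Rightarrow> nat" assume "i \<in> {1..M}" "Q i s" "strict_mono r'"
      then obtain F \<rho> \<mu> where q: "F \<in> sets m" "P F \<le> ennreal (t * R)"
        "L1_conv_sets m (\<lambda>k. D (s k) i) F" "(\<lambda>k. r (s k) i) \<longlonglongrightarrow> \<rho>"
        "(\<lambda>k. emeasure m (D (s k) i)) \<longlonglongrightarrow> \<mu>" unfolding Q_def by blast
      show "Q i (s \<circ> r')" unfolding Q_def
      proof (intro exI conjI)
        show "F \<in> sets m" "P F \<le> ennreal (t * R)" by fact+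
        show "L1_conv_sets m (\<lambda>k. D ((s \<circ> r') k) i) F"
          using LIMSEQ_subseq_LIMSEQ[OF q(3)[unfolded L1_conv_sets_def] \<open>strict_mono r'\<close>]
          unfolding L1_conv_sets_def by (simp add: o_def)
        show "(\<lambda>k. r ((s \<circ> r') k) i) \<longlonglongrightarrow> \<rho>"
          using LIMSEQ_subseq_LIMSEQ[OF q(4) \<open>strict_mono r'\<close>] by (simp add: o_def)
        show "(\<lambda>k. emeasure m (D ((s \<circ> r') k) i)) \<longlonglongrightarrow> \<mu>"
          using LIMSEQ_subseq_LIMSEQ[OF q(5) \<open>strict_mono r'\<close>] by (simp add: o_def)
      qed
    qed auto
    then obtain s where s: "strict_mono s" "\<forall>i\<in>{1..M}. Q i s" by blast
    then obtain F \<rho> \<mu> where F: "\<And>i. i \<in> {1..M} \<Longrightarrow> F i \<in> sets m \<and> P (F i) \<le> ennreal (t * R)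
       \<and> L1_conv_sets m (\<lambda>k. D (s k) i) (F i) \<and> (\<lambda>k. r (s k) i) \<longlonglongrightarrow> \<rho> i
       \<and> (\<lambda>k. emeasure m (D (s k) i)) \<longlonglongrightarrow> \<mu> i"
      unfolding Q_def by metis
    have Fs: "F i \<in> sets m" and FP: "P (F i) \<le> ennreal (t * R)"
      and Fc: "L1_conv_sets m (\<lambda>k. D (s k) i) (F i)" and Fr: "(\<lambda>k. r (s k) i) \<longlonglongrightarrow> \<rho> i"
      and Fm: "(\<lambda>k. emeasure m (D (s k) i)) \<longlonglongrightarrow> \<mu> i" if "i \<in> {1..M}" for i
      using F[OF that] by auto
    have s0s: "strict_mono (s0 \<circ> s)" using s0(1) s(1) by (simp add: strict_mono_def)
    have dO: "(\<lambda>k. d (s0 (s k))) \<longlonglongrightarrow> 0"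
      using LIMSEQ_subseq_LIMSEQ[OF d0 s0s] by (simp add: o_def)
    define dE where "dE i k = emeasure m (sdiff (D (s k) i) (F i))" for i k
    have dE0: "dE i \<longlonglongrightarrow> 0" if i: "i \<in> {1..M}" for i
      using L1_iff[of "\<lambda>k. D (s k) i" m "F i"] Fc[OF i] Fs[OF i] Dsets[OF i] unfolding dE_def by simp
    have \<mu>F: "\<mu> i = emeasure m (F i)" if i: "i \<in> {1..M}" for i
    proof (rule antisym)
      have "emeasure m (D (s k) i) \<le> emeasure m (F i) + dE i k" for k
        unfolding dE_def using Fs[OF i] Dsets[OF i, of "s k"] by (intro meas_le2) (auto simp: sdiff_def)
      then show "\<mu> i \<le> emeasure m (F i)"
        by (rule lim_le_of[OF Fm[OF i] dE0[OF i]])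
      have "emeasure m (F i) \<le> emeasure m (D (s k) i) + dE i k" for k
        unfolding dE_def using Fs[OF i] Dsets[OF i, of "s k"] by (intro meas_le2) (auto simp: sdiff_def)
      then show "emeasure m (F i) \<le> \<mu> i"
        by (rule le_lim_of[OF Fm[OF i] dE0[OF i]])
    qed
    have \<mu>low: "ennreal e0 \<le> \<mu> i" if i: "i \<in> {1..M}" for i
      using Fm[OF i] Dlow[OF i] by (intro LIMSEQ_le_const[of "\<lambda>k. emeasure m (D (s k) i)"]) (auto intro: less_imp_le)
    have \<mu>up: "\<mu> i \<le> ennreal R" if i: "i \<in> {1..M}" for i
      using Fm[OF i] Dm[OF i] by (intro LIMSEQ_le_const2[of "\<lambda>k. emeasure m (D (s k) i)"]) auto
    have \<rho>up: "\<rho> i \<le> y" if i: "i \<in> {1..M}" for i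
      using Fr[OF i] rle[OF i] by (intro LIMSEQ_le_const2[of "\<lambda>k. r (s k) i"]) (auto intro: less_imp_le)
    have PF: "P (F i) \<le> \<rho> i * \<mu> i" if i: "i \<in> {1..M}" for i
    proof -
      have "P (F i) \<le> liminf (\<lambda>k. P (D (s k) i))"
        using p4[unfolded P4_def, rule_format, of "\<lambda>k. D (s k) i" "F i"] Fc[OF i] Fs[OF i] Dsets[OF i] by blast
      moreover have "(\<lambda>k. P (D (s k) i)) \<longlonglongrightarrow> \<rho> i * \<mu> i"
      proof -
        have "(\<lambda>k. r (s k) i * emeasure m (D (s k) i)) \<longlonglongrightarrow> \<rho> i * \<mu> i"
          using Fr[OF i] Fm[OF i] \<mu>up[OF i] \<rho>up[OF i] yt
          by (intro tendsto_mult_ennreal) (auto simp: top_unique)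
        then show ?thesis using Prm[OF i] by simp
      qed
      then have "liminf (\<lambda>k. P (D (s k) i)) = \<rho> i * \<mu> i" by (intro lim_imp_Liminf) auto
      ultimately show ?thesis by simp
    qed
    have Fpos: "0 < emeasure m (F i)" if i: "i \<in> {1..M}" for i
      using \<mu>low[OF i] \<mu>F[OF i] e0 by (metis ennreal_less_zero_iff order.strict_trans2)
    have Ffin: "emeasure m (F i) < top" if i: "i \<in> {1..M}" for i
      using \<mu>up[OF i] \<mu>F[OF i] by (metis ennreal_less_top order.strict_trans1)
    have ratioF: "P (F i) / emeasure m (F i) \<le> \<rho> i" if i: "i \<in> {1..M}" for i
      using PF[OF i] \<mu>F[OF i] Fpos[OF i] Ffin[OF i] by (intro ratio_upper) auto
    have sum\<rho>: "(\<Sum>i = 1..M. \<rho> i) \<le> y"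
    proof (rule LIMSEQ_le_const2)
      show "(\<lambda>k. \<Sum>i = 1..M. r (s k) i) \<longlonglongrightarrow> (\<Sum>i = 1..M. \<rho> i)"
        using Fr by (intro tendsto_sum) auto
      show "\<exists>N. \<forall>n\<ge>N. (\<Sum>i = 1..M. r (s n) i) \<le> y"
        using D(2) unfolding r_def by (auto intro: less_imp_le)
    qed
    have FaeO: "ae_subset m (F i) \<Omega>" if i: "i \<in> {1..M}" for i
    proof -
      have "emeasure m (F i - \<Omega>) \<le> 0 + (dE i k + d (s0 (s k)))" for k
      proof -
        have sub: "F i - \<Omega> \<subseteq> (D (s k) i - \<Omega>s (s0 (s k))) \<union> sdiff (D (s k) i) (F i) \<union> sdiff (\<Omega>s (s0 (s k))) \<Omega>"
          by (auto simp: sdiff_def)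
        have "emeasure m (F i - \<Omega>) \<le> emeasure m (D (s k) i - \<Omega>s (s0 (s k))) + dE i k + d (s0 (s k))"
          unfolding dE_def d_def
          by (rule meas_le3[OF _ _ _ _ sub]) (use Fs[OF i] Dsets[OF i, of "s k"] sets[of "s0 (s k)"] \<Omega> in \<open>auto simp: sdiff_def\<close>)
        then show ?thesis using Dae[OF i, of "s k"] unfolding ae_subset_def by (simp add: add.assoc)
      qed
      moreover have "(\<lambda>k. dE i k + d (s0 (s k))) \<longlonglongrightarrow> 0"
        using tendsto_add_zero[OF dE0[OF i] dO] .
      ultimately have "emeasure m (F i - \<Omega>) \<le> 0"
        by (rule le_of_tend0[where d="\<lambda>k. dE i k + d (s0 (s k))"])
      then show "ae_subset m (F i) \<Omega>" unfolding ae_subset_def by simp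
    qed
    have Fdisj: "emeasure m (F i \<inter> F j) = 0" if i: "i \<in> {1..M}" and j: "j \<in> {1..M}" and ij: "i \<noteq> j" for i j
    proof -
      have "emeasure m (F i \<inter> F j) \<le> 0 + (dE i k + dE j k)" for k
      proof -
        have sub: "F i \<inter> F j \<subseteq> (D (s k) i \<inter> D (s k) j) \<union> sdiff (D (s k) i) (F i) \<union> sdiff (D (s k) j) (F j)"
          by (auto simp: sdiff_def)
        have "emeasure m (F i \<inter> F j) \<le> emeasure m (D (s k) i \<inter> D (s k) j) + dE i k + dE j k"
          unfolding dE_def
          by (rule meas_le3[OF _ _ _ _ sub]) (use Fs[OF i] Fs[OF j] Dsets[OF i, of "s k"] Dsets[OF j, of "s k"] in \<open>auto simp: sdiff_def\<close>)
        then show ?thesis using Ddisj[OF i j ij, of "s k"] by (simp add: add.assoc)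
      qed
      moreover have "(\<lambda>k. dE i k + dE j k) \<longlonglongrightarrow> 0"
        using tendsto_add_zero[OF dE0[OF i] dE0[OF j]] .
      ultimately have "emeasure m (F i \<inter> F j) \<le> 0"
        by (rule le_of_tend0[where d="\<lambda>k. dE i k + dE j k"])
      then show ?thesis by simp
    qed
    have FP': "P (F i) < top" if i: "i \<in> {1..M}" for i
      using FP[OF i] by (metis ennreal_less_top order.strict_trans1)
    have clF: "cluster_in m P M F \<Omega>"
      unfolding cluster_in_def is_cluster_def using Fs Fpos Ffin FP' Fdisj FaeO by simp
    have "h_const m P M \<Omega> \<le> (\<Sum>i = 1..M. P (F i) / emeasure m (F i))"
      unfolding h_const_def using clF by (intro Inf_lower) blast
    also have "\<dots> \<le> (\<Sum>i = 1..M. \<rho> i)" using ratioF by (intro sum_mono) auto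
    also have "\<dots> \<le> y" by (rule sum\<rho>)
    finally show ?thesis .
  qed
qed


lemma cancel_aux:
  fixes p u e a c q :: ennreal
  assumes h: "p \<le> u + e" "a + u \<le> c + q" "q \<le> p + e" "p \<noteq> top"
  shows "a \<le> c + (e + e)"
proof -
  have "a + p \<le> a + u + e" using h(1) by (metis add.assoc add_left_mono)
  also have "\<dots> \<le> c + q + e" using h(2) by (metis add_right_mono)
  also have "\<dots> \<le> c + (p + e) + e" using h(3) by (metis add_left_mono add_right_mono)
  also have "\<dots> = p + (c + (e + e))" by (simp add: algebra_simps)
  finally have "p + a \<le> p + (c + (e + e))" by (simp add: add.commute)
  then show ?thesis using h(4) by (simp add: ennreal_add_left_cancel_le)
qed

lemma part3b:
  assumes sets: "\<And>k. \<Omega>s k \<in> sets m" and \<Omega>: "\<Omega> \<in> sets m"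
    and p3: "P3 m P" and p4: "P4 m P"
    and conv: "L1_conv_sets m \<Omega>s \<Omega>" and P\<Omega>: "P \<Omega> < top" and Plim: "(\<lambda>k. P (\<Omega>s k)) \<longlonglongrightarrow> P \<Omega>"
    and hlow: "h_const m P M \<Omega> \<le> liminf (\<lambda>k. h_const m P M (\<Omega>s k))"
  shows "(\<lambda>k. h_const m P M (\<Omega>s k)) \<longlonglongrightarrow> h_const m P M \<Omega>"
proof -
  define d where "d k = emeasure m (sdiff (\<Omega>s k) \<Omega>)" for k
  have d0: "d \<longlonglongrightarrow> 0" using L1_iff[of \<Omega>s m \<Omega>] sets \<Omega> conv unfolding d_def by simp
  obtain p where p: "P \<Omega> = ennreal p" "0 \<le> p" using P\<Omega> by (cases "P \<Omega>" rule: ennreal_cases) auto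
  have hup: "limsup (\<lambda>k. h_const m P M (\<Omega>s k)) \<le> h_const m P M \<Omega>"
    unfolding h_const_def[of m P M \<Omega>]
  proof (rule Inf_greatest, safe)
    fix C assume C: "cluster_in m P M C \<Omega>"
    have Cs: "C i \<in> sets m" and Cpos: "0 < emeasure m (C i)" and Cfin: "emeasure m (C i) < top"
      and CP: "P (C i) < top" and Cae: "ae_subset m (C i) \<Omega>" if "i \<in> {1..M}" for i
      using C that unfolding cluster_in_def is_cluster_def by auto
    have Cdisj: "emeasure m (C i \<inter> C j) = 0" if "i \<in> {1..M}" "j \<in> {1..M}" "i \<noteq> j" for i j
      using C that unfolding cluster_in_def is_cluster_def by auto
    define A where "A k i = C i \<inter> \<Omega>s k" for k i
    have As: "A k i \<in> sets m" if "i \<in> {1..M}" for k i using Cs[OF that] sets unfolding A_def by auto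
    have mlim: "(\<lambda>k. emeasure m (A k i)) \<longlonglongrightarrow> emeasure m (C i)" if i: "i \<in> {1..M}" for i
    proof (rule ennreal_epsilon_tendsto)
      fix e :: real assume "0 < e"
      have "emeasure m (A k i) \<le> emeasure m (C i)" for k
        unfolding A_def using Cs[OF i] sets by (intro emeasure_mono) auto
      then show "eventually (\<lambda>k. emeasure m (A k i) \<le> emeasure m (C i) + ennreal e) sequentially"
        by (intro always_eventually allI add_increasing2) auto
      have "eventually (\<lambda>k. d k < ennreal e) sequentially"
        using d0 \<open>0 < e\<close> by (intro order_tendstoD) auto
      then show "eventually (\<lambda>k. emeasure m (C i) \<le> emeasure m (A k i) + ennreal e) sequentially"
      proof eventually_elim
        case (elim k)
        have sub: "C i \<subseteq> A k i \<union> (C i - \<Omega>) \<union> sdiff (\<Omega>s k) \<Omega>" unfolding A_def sdiff_def by auto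
        have "emeasure m (C i) \<le> emeasure m (A k i) + emeasure m (C i - \<Omega>) + d k"
          unfolding d_def by (rule meas_le3[OF _ _ _ _ sub]) (use Cs[OF i] As[OF i, of k] sets[of k] \<Omega> in \<open>auto simp: sdiff_def\<close>)
        also have "\<dots> \<le> emeasure m (A k i) + ennreal e"
          using Cae[OF i] elim unfolding ae_subset_def by (simp add: add_left_mono less_imp_le)
        finally show ?case .
      qed
    qed
    have Pup: "eventually (\<lambda>k. P (A k i) \<le> P (C i) + ennreal e) sequentially"
      if i: "i \<in> {1..M}" and e: "0 < e" for i e
    proof -
      define U where "U k = C i \<union> \<Omega>s k" for k
      have Us: "U k \<in> sets m" for k unfolding U_def using Cs[OF i] sets by auto
      have "(\<lambda>k. emeasure m (sdiff (U k) \<Omega>)) \<longlonglongrightarrow> 0"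
      proof (rule tendsto_sandwich[of "\<lambda>_. 0" _ _ d])
        show "eventually (\<lambda>k. emeasure m (sdiff (U k) \<Omega>) \<le> d k) sequentially"
        proof (rule always_eventually, rule allI)
          fix k
          have sub: "sdiff (U k) \<Omega> \<subseteq> (C i - \<Omega>) \<union> sdiff (\<Omega>s k) \<Omega>" unfolding U_def sdiff_def by auto
          have "emeasure m (sdiff (U k) \<Omega>) \<le> emeasure m (C i - \<Omega>) + d k"
            unfolding d_def by (rule meas_le2[OF _ _ _ sub]) (use Cs[OF i] Us[of k] sets[of k] \<Omega> in \<open>auto simp: sdiff_def\<close>)
          then show "emeasure m (sdiff (U k) \<Omega>) \<le> d k" using Cae[OF i] unfolding ae_subset_def by simp
        qed
      qed (use d0 in auto)
      then have "L1_conv_sets m U \<Omega>" using L1_iff[of U m \<Omega>] Us \<Omega> by simp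
      then have liU: "P \<Omega> \<le> liminf (\<lambda>k. P (U k))"
        using p4[unfolded P4_def, rule_format, of U \<Omega>] Us \<Omega> by blast
      define e' where "e' = e / 2"
      have e': "0 < e'" "ennreal e' + ennreal e' = ennreal e" unfolding e'_def using e
        by (auto simp flip: ennreal_plus)
      have ev1: "eventually (\<lambda>k. ennreal p \<le> P (U k) + ennreal e') sequentially"
      proof (cases "p \<le> e'")
        case True
        then have "ennreal p \<le> ennreal e'" by (rule ennreal_leI)
        then show ?thesis by (intro always_eventually allI add_increasing) auto
      next
        case False
        then have "ennreal (p - e') < P \<Omega>" using p e' by (simp add: ennreal_less_iff)
        then have "eventually (\<lambda>k. ennreal (p - e') < P (U k)) sequentially"
          using liU by (intro less_LiminfD) order
        then show ?thesis
        proof eventually_elim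
          case (elim k)
          have "ennreal p = ennreal (p - e') + ennreal e'" using False e' by (simp flip: ennreal_plus)
          also have "\<dots> \<le> P (U k) + ennreal e'" using elim by (intro add_right_mono) simp
          finally show ?case .
        qed
      qed
      have ev2: "eventually (\<lambda>k. P (\<Omega>s k) \<le> ennreal p + ennreal e') sequentially"
      proof -
        have "ennreal p < ennreal p + ennreal e'" using e' p by (simp flip: ennreal_plus add: ennreal_less_iff)
        then have "eventually (\<lambda>k. P (\<Omega>s k) < ennreal p + ennreal e') sequentially"
          using Plim p by (intro order_tendstoD) auto
        then show ?thesis by (auto elim: eventually_mono)
      qed
      show ?thesis using ev1 ev2
      proof eventually_elim
        case (elim k)
        have "P (C i \<inter> \<Omega>s k) + P (C i \<union> \<Omega>s k) \<le> P (C i) + P (\<Omega>s k)"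
          using p3 Cs[OF i] sets[of k] unfolding P3_def by blast
        then have "P (A k i) \<le> P (C i) + (ennreal e' + ennreal e')"
          using elim unfolding A_def U_def by (intro cancel_aux[of "ennreal p" _ _ _ _ "P (\<Omega>s k)"]) auto
        then show ?case using e' by simp
      qed
    qed
    define a where "a k i = max (P (A k i)) (P (C i))" for k i
    have alim: "(\<lambda>k. a k i) \<longlonglongrightarrow> P (C i)" if i: "i \<in> {1..M}" for i
    proof (rule ennreal_epsilon_tendsto)
      fix e :: real assume "0 < e"
      show "eventually (\<lambda>k. a k i \<le> P (C i) + ennreal e) sequentially"
        using Pup[OF i \<open>0 < e\<close>] by eventually_elim (simp add: a_def add_increasing2)
      show "eventually (\<lambda>k. P (C i) \<le> a k i + ennreal e) sequentially"
        by (intro always_eventually allI) (simp add: a_def add_increasing2)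
    qed
    have Tlim: "(\<lambda>k. \<Sum>i = 1..M. a k i / emeasure m (A k i)) \<longlonglongrightarrow> (\<Sum>i = 1..M. P (C i) / emeasure m (C i))"
    proof (rule tendsto_sum)
      fix i assume i: "i \<in> {1..M}"
      have "(\<lambda>k. a k i * inverse (emeasure m (A k i))) \<longlonglongrightarrow> P (C i) * inverse (emeasure m (C i))"
        using alim[OF i] tendsto_inverse_ennreal[OF mlim[OF i]] CP[OF i] Cfin[OF i] Cpos[OF i]
        by (intro tendsto_mult_ennreal) auto
      then show "(\<lambda>k. a k i / emeasure m (A k i)) \<longlonglongrightarrow> P (C i) / emeasure m (C i)"
        by (simp add: divide_ennreal_def)
    qed
    have evcl: "eventually (\<lambda>k. \<forall>i\<in>{1..M}. 0 < emeasure m (A k i) \<and> P (A k i) < top) sequentially"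
    proof (rule eventually_ball_finite, simp, rule ballI)
      fix i assume i: "i \<in> {1..M}"
      have "eventually (\<lambda>k. 0 < emeasure m (A k i)) sequentially"
        using mlim[OF i] Cpos[OF i] by (rule order_tendstoD)
      moreover have "eventually (\<lambda>k. P (A k i) \<le> P (C i) + ennreal 1) sequentially"
        using Pup[OF i, of 1] by simp
      ultimately show "eventually (\<lambda>k. 0 < emeasure m (A k i) \<and> P (A k i) < top) sequentially"
      proof eventually_elim
        case (elim k)
        then show ?case using CP[OF i] by (metis ennreal_add_less_top ennreal_less_top order.strict_trans1 ennreal_1)
      qed
    qed
    have "eventually (\<lambda>k. h_const m P M (\<Omega>s k) \<le> (\<Sum>i = 1..M. a k i / emeasure m (A k i))) sequentially"
      using evcl
    proof eventually_elim
      case (elim k)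
      have cl: "cluster_in m P M (A k) (\<Omega>s k)"
        unfolding cluster_in_def is_cluster_def
      proof (intro conjI ballI impI)
        fix i assume i: "i \<in> {1..M}"
        show "A k i \<in> sets m" by (rule As[OF i])
        show "0 < emeasure m (A k i)" "P (A k i) < top" using elim i by auto
        have "emeasure m (A k i) \<le> emeasure m (C i)"
          unfolding A_def using Cs[OF i] sets by (intro emeasure_mono) auto
        then show "emeasure m (A k i) < top" using Cfin[OF i] by order
        have "C i \<inter> \<Omega>s k - \<Omega>s k = {}" by blast
        then show "ae_subset m (A k i) (\<Omega>s k)" unfolding ae_subset_def A_def by (metis emeasure_empty)
      next
        fix i j assume i: "i \<in> {1..M}" and j: "j \<in> {1..M}" and ij: "i \<noteq> j"
        have "emeasure m (A k i \<inter> A k j) \<le> emeasure m (C i \<inter> C j)"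
          unfolding A_def using Cs[OF i] Cs[OF j] by (intro emeasure_mono) auto
        then show "emeasure m (A k i \<inter> A k j) = 0" using Cdisj[OF i j ij] by simp
      qed
      have "h_const m P M (\<Omega>s k) \<le> (\<Sum>i = 1..M. P (A k i) / emeasure m (A k i))"
        unfolding h_const_def using cl by (intro Inf_lower) blast
      also have "\<dots> \<le> (\<Sum>i = 1..M. a k i / emeasure m (A k i))"
        by (intro sum_mono divide_right_mono_ennreal) (simp add: a_def)
      finally show ?case .
    qed
    then have "limsup (\<lambda>k. h_const m P M (\<Omega>s k)) \<le> limsup (\<lambda>k. \<Sum>i = 1..M. a k i / emeasure m (A k i))"
      by (rule Limsup_mono)
    also have "\<dots> = (\<Sum>i = 1..M. P (C i) / emeasure m (C i))"
      using Tlim by (intro lim_imp_Limsup) auto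
    finally show "limsup (\<lambda>k. h_const m P M (\<Omega>s k)) \<le> (\<Sum>i = 1..M. P (C i) / emeasure m (C i))" .
  qed
  have "liminf (\<lambda>k. h_const m P M (\<Omega>s k)) \<le> limsup (\<lambda>k. h_const m P M (\<Omega>s k))"
    by (simp add: Liminf_le_Limsup)
  then show ?thesis using hup hlow by (intro Liminf_eq_Limsup) auto
qed


theorem proposition3p9:
  fixes m :: "'a measure" and P :: "'a set \<Rightarrow> ennreal"
    and N M :: nat and \<Omega>s :: "nat \<Rightarrow> 'a set"
  assumes "sigma_finite_measure m"
    and "proper_functional m P"
    and "\<And>k. \<Omega>s k \<in> sets m"
    and "\<And>k. admissible m P N (\<Omega>s k)"
    and "1 \<le> M" and "M \<le> N"
  shows "(\<forall>A B. admissible m P N A \<longrightarrow> admissible m P N B \<longrightarrow> ae_subset m A B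
            \<longrightarrow> h_const m P M A \<ge> h_const m P M B)
    \<and> (P6 m P \<longrightarrow> ((\<lambda>k. emeasure m (\<Omega>s k)) \<longlonglongrightarrow> 0)
            \<longrightarrow> ((\<lambda>k. h_const m P M (\<Omega>s k)) \<longlonglongrightarrow> top))
    \<and> (\<forall>\<Omega>. P4 m P \<longrightarrow> P5 m P \<longrightarrow> P6 m P \<longrightarrow> \<Omega> \<in> sets m
            \<longrightarrow> 0 < emeasure m \<Omega> \<longrightarrow> emeasure m \<Omega> < top \<longrightarrow> L1_conv_sets m \<Omega>s \<Omega>
            \<longrightarrow> (h_const m P M \<Omega> \<le> liminf (\<lambda>k. h_const m P M (\<Omega>s k))
                \<and> (P3 m P \<longrightarrow> P \<Omega> < top \<longrightarrow> ((\<lambda>k. P (\<Omega>s k)) \<longlonglongrightarrow> P \<Omega>)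
                    \<longrightarrow> ((\<lambda>k. h_const m P M (\<Omega>s k)) \<longlonglongrightarrow> h_const m P M \<Omega>))))"
  proof -
  have G1: "\<forall>A B. admissible m P N A \<longrightarrow> admissible m P N B \<longrightarrow> ae_subset m A B
            \<longrightarrow> h_const m P M A \<ge> h_const m P M B"
  proof (intro allI impI)
    fix A B assume "admissible m P N A" "admissible m P N B" "ae_subset m A B"
    then show "h_const m P M A \<ge> h_const m P M B"
      using part1[of m P N A B M] unfolding admissible_def by auto
  qed
  have G2: "P6 m P \<longrightarrow> ((\<lambda>k. emeasure m (\<Omega>s k)) \<longlonglongrightarrow> 0)
            \<longrightarrow> ((\<lambda>k. h_const m P M (\<Omega>s k)) \<longlonglongrightarrow> top)"
    using part2[of m P N \<Omega>s M] assms(4,5,6) by blast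
  have G3: "\<forall>\<Omega>. P4 m P \<longrightarrow> P5 m P \<longrightarrow> P6 m P \<longrightarrow> \<Omega> \<in> sets m
            \<longrightarrow> 0 < emeasure m \<Omega> \<longrightarrow> emeasure m \<Omega> < top \<longrightarrow> L1_conv_sets m \<Omega>s \<Omega>
            \<longrightarrow> (h_const m P M \<Omega> \<le> liminf (\<lambda>k. h_const m P M (\<Omega>s k))
                \<and> (P3 m P \<longrightarrow> P \<Omega> < top \<longrightarrow> ((\<lambda>k. P (\<Omega>s k)) \<longlonglongrightarrow> P \<Omega>)
                    \<longrightarrow> ((\<lambda>k. h_const m P M (\<Omega>s k)) \<longlonglongrightarrow> h_const m P M \<Omega>)))"
  proof (intro allI impI)
    fix \<Omega> assume h: "P4 m P" "P5 m P" "P6 m P" "\<Omega> \<in> sets m" "0 < emeasure m \<Omega>"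
      "emeasure m \<Omega> < top" "L1_conv_sets m \<Omega>s \<Omega>"
    have low: "h_const m P M \<Omega> \<le> liminf (\<lambda>k. h_const m P M (\<Omega>s k))"
      using part3a[of \<Omega>s m \<Omega> M P] h assms(3,5) by blast
    show "h_const m P M \<Omega> \<le> liminf (\<lambda>k. h_const m P M (\<Omega>s k))
                \<and> (P3 m P \<longrightarrow> P \<Omega> < top \<longrightarrow> ((\<lambda>k. P (\<Omega>s k)) \<longlonglongrightarrow> P \<Omega>)
                    \<longrightarrow> ((\<lambda>k. h_const m P M (\<Omega>s k)) \<longlonglongrightarrow> h_const m P M \<Omega>))"
      using low part3b[of \<Omega>s m \<Omega> P M] h assms(3) by blast
  qed
  show ?thesis using G1 G2 G3 by blast
qed

end
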